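(* Let $w_1,\dots,w_r\in\mathbb{R}^{2n}$ be pairwise distinct points whose real affine span has dimension at least $3$, and let $f(x)=\sum_{i=1}^r\log|x-w_i|^2$ on $\mathbb{R}^{2n}\setminus\{w_1,\dots,w_r\}$. Then at every critical point of $f$ the Hessian of $f$ has positivity index at least $2n-1$.
   Context: $|\cdot|$ is the Euclidean norm. The positivity index of a symmetric bilinear form is the number of positive eigenvalues of its matrix. *)

theory Defs
  imports "HOL-Analysis.Analysis" "HOL-Computational_Algebra.Polynomial"
begin

definition partial_deriv :: "(real^'n \<Rightarrow> real) \<Rightarrow> 'n \<Rightarrow> real^'n \<Rightarrow> real" where
  "partial_deriv f i x = deriv (\<lambda>t. f (x + t *\<^sub>R axis i 1)) 0"

definition hessian :: "(real^'n \<Rightarrow> real) \<Rightarrow> real^'n \<Rightarrow> real^'n^'n" where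
  "hessian f x = (\<chi> i j. partial_deriv (partial_deriv f j) i x)"

definition charpoly :: "real^'n^'n \<Rightarrow> real poly" where
  "charpoly A = det (\<chi> i j. (if i = j then [:0, 1:] else 0) - [:A $ i $ j:])"

definition positivity_index :: "real^'n^'n \<Rightarrow> nat" where
  "positivity_index A = (\<Sum>a\<in>{a. a > 0 \<and> poly (charpoly A) a = 0}. order a (charpoly A))"

end

theory Submission
  imports Defs
begin

lemma sym_dot:
  fixes H :: "real^'n^'n"
  assumes sym: "transpose H = H"
  shows "x \<bullet> (H *v y) = (H *v x) \<bullet> y"
  by (metis dot_lmul_matrix vector_transpose_matrix sym)

lemma quad_zero:
  fixes a b :: real
  assumes "\<And>t. 2*t*a + t^2*b \<le> 0"
  shows "a = 0"
proof -
  define s where "s = 1/(1+\<bar>b\<bar>)"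
  have s: "s > 0" "s*\<bar>b\<bar> < 1" unfolding s_def by (auto simp: field_simps)
  have "2*(s*a)*a + (s*a)^2*b \<le> 0" by (rule assms)
  hence "s*a^2*(2 + s*b) \<le> 0" by (simp add: power2_eq_square algebra_simps)
  moreover have "2 + s*b > 0" using s by (smt (verit) mult_le_cancel_left abs_ge_self abs_ge_minus_self mult_minus_right)
  ultimately have "a^2 \<le> 0" using s by (smt (verit) mult_pos_pos zero_less_power2 mult_pos_neg)
  thus ?thesis by simp
qed

lemma max_eig:
  fixes H :: "real^'n^'n"
  assumes sym: "transpose H = H" and S: "subspace S" and inv: "\<forall>v\<in>S. H *v v \<in> S"
    and v: "v \<in> S" "norm v = 1"
    and mx: "\<forall>y\<in>S. norm y = 1 \<longrightarrow> y \<bullet> (H *v y) \<le> v \<bullet> (H *v v)"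
  shows "H *v v = (v \<bullet> (H *v v)) *\<^sub>R v"
proof -
  define l where "l = v \<bullet> (H *v v)"
  have gen: "y \<bullet> (H *v y) \<le> l * (y \<bullet> y)" if "y \<in> S" for y
  proof (cases "y = 0")
    case True then show ?thesis by simp
  next
    case False
    define z where "z = (1/norm y) *\<^sub>R y"
    have "z \<in> S" using S that unfolding z_def by (simp add: subspace_scale)
    moreover have "norm z = 1" using False unfolding z_def by simp
    ultimately have "z \<bullet> (H *v z) \<le> l" using mx l_def by blast
    hence "(1/norm y)^2 * (y \<bullet> (H *v y)) \<le> l" unfolding z_def
      by (simp add: matrix_vector_mult_scaleR power2_eq_square)
    hence "y \<bullet> (H *v y) \<le> l * (norm y)^2" using False
      by (simp add: field_simps)
    thus ?thesis by (simp add: dot_square_norm)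
  qed
  have orth: "w \<bullet> (H *v v - l *\<^sub>R v) = 0" if w: "w \<in> S" for w
  proof -
    have "2*t*(w \<bullet> (H *v v - l *\<^sub>R v)) + t^2*(w \<bullet> (H *v w) - l*(w \<bullet> w)) \<le> 0" for t
    proof -
      have "v + t *\<^sub>R w \<in> S" using S v w by (simp add: subspace_add subspace_scale)
      from gen[OF this] have "(v + t *\<^sub>R w) \<bullet> (H *v (v + t *\<^sub>R w)) \<le> l * ((v + t *\<^sub>R w) \<bullet> (v + t *\<^sub>R w))" .
      moreover have "v \<bullet> (H *v w) = w \<bullet> (H *v v)" using sym_dot[OF sym, of v w] by (simp add: inner_commute)
      moreover have "v \<bullet> v = 1" using v by (simp add: dot_square_norm)
      ultimately show ?thesis unfolding l_def
        by (simp add: matrix_vector_right_distrib matrix_vector_mult_scaleR inner_add_left inner_add_right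
             inner_diff_right algebra_simps power2_eq_square inner_commute[of w v])
    qed
    thus ?thesis by (rule quad_zero)
  qed
  have "H *v v - l *\<^sub>R v \<in> S" using S inv v by (simp add: subspace_diff subspace_scale)
  from orth[OF this] have "H *v v - l *\<^sub>R v = 0" by simp
  thus ?thesis unfolding l_def by simp
qed


lemma spectral_sub:
  fixes H :: "real^'n^'n"
  assumes sym: "transpose H = H"
  shows "subspace S \<Longrightarrow> (\<forall>v\<in>S. H *v v \<in> S) \<Longrightarrow>
    \<exists>B. B \<subseteq> S \<and> pairwise orthogonal B \<and> (\<forall>b\<in>B. norm b = 1 \<and> (\<exists>l. H *v b = l *\<^sub>R b)) \<and> span B = S"
proof (induction "dim S" arbitrary: S rule: less_induct)
  case less
  show ?case
  proof (cases "S = {0}")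
    case True
    then show ?thesis by (intro exI[of _ "{}"]) auto
  next
    case False
    then obtain y where y: "y \<in> S" "y \<noteq> 0" using less.prems subspace_0 by blast
    define K where "K = S \<inter> sphere 0 1"
    have "(1/norm y) *\<^sub>R y \<in> K" using y less.prems unfolding K_def by (simp add: subspace_scale)
    hence Kne: "K \<noteq> {}" by blast
    have "compact K" unfolding K_def
      by (simp add: closed_Int_compact closed_subspace less.prems)
    moreover have "continuous_on K (\<lambda>x. x \<bullet> (H *v x))"
      by (intro continuous_intros)
    ultimately obtain v where v: "v \<in> K" and mx: "\<forall>z\<in>K. z \<bullet> (H *v z) \<le> v \<bullet> (H *v v)"
      using continuous_attains_sup Kne by blast
    have vS: "v \<in> S" "norm v = 1" using v unfolding K_def by auto
    have ev: "H *v v = (v \<bullet> (H *v v)) *\<^sub>R v"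
      by (rule max_eig[OF sym less.prems vS]) (use mx in \<open>auto simp: K_def\<close>)
    define S' where "S' = {z\<in>S. v \<bullet> z = 0}"
    have S': "subspace S'" unfolding S'_def using less.prems(1)
      by (auto simp: subspace_def inner_add_right)
    have invS': "\<forall>z\<in>S'. H *v z \<in> S'"
    proof
      fix z assume z: "z \<in> S'"
      have "v \<bullet> (H *v z) = (H *v v) \<bullet> z" by (rule sym_dot[OF sym])
      also have "\<dots> = 0" using z ev unfolding S'_def by (metis (mono_tags) inner_scaleR_left mem_Collect_eq mult_zero_right)
      finally show "H *v z \<in> S'" using z less.prems unfolding S'_def by auto
    qed
    have "S' \<subseteq> S" unfolding S'_def by auto
    moreover have "v \<notin> S'" using vS unfolding S'_def by (auto simp: dot_square_norm)
    ultimately have "span S' \<subset> span S" using vS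
      by (metis less.prems(1) S' span_eq_iff psubsetI)
    hence "dim S' < dim S" by (rule dim_psubset)
    from less.hyps[OF this S' invS'] obtain B' where B': "B' \<subseteq> S'" "pairwise orthogonal B'"
      "\<forall>b\<in>B'. norm b = 1 \<and> (\<exists>l. H *v b = l *\<^sub>R b)" "span B' = S'" by blast
    show ?thesis
    proof (intro exI[of _ "insert v B'"] conjI)
      show "insert v B' \<subseteq> S" using B'(1) vS unfolding S'_def by auto
      show "pairwise orthogonal (insert v B')" using B'(1,2) unfolding S'_def
        by (auto simp: pairwise_insert orthogonal_def inner_commute)
      show "\<forall>b\<in>insert v B'. norm b = 1 \<and> (\<exists>l. H *v b = l *\<^sub>R b)" using B'(3) vS ev by blast
      show "span (insert v B') = S"
      proof
        show "span (insert v B') \<subseteq> S" using B'(1) vS less.prems(1) unfolding S'_def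
          by (intro span_minimal) auto
        show "S \<subseteq> span (insert v B')"
        proof
          fix z assume z: "z \<in> S"
          have "z - (v \<bullet> z) *\<^sub>R v \<in> S'" using z vS less.prems(1) unfolding S'_def
            by (auto simp: subspace_diff subspace_scale inner_diff_right dot_square_norm)
          hence "z - (v \<bullet> z) *\<^sub>R v \<in> span (insert v B')" using B'(4) by (metis span_mono subset_insertI subsetD)
          moreover have "(v \<bullet> z) *\<^sub>R v \<in> span (insert v B')" by (simp add: span_base span_scale)
          ultimately have "z - (v \<bullet> z) *\<^sub>R v + (v \<bullet> z) *\<^sub>R v \<in> span (insert v B')" by (rule span_add)
          thus "z \<in> span (insert v B')" by simp
        qed
      qed
    qed
  qed
qed


lemma spectral:
  fixes H :: "real^'n^'n"
  assumes sym: "transpose H = H"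
  obtains q :: "'n \<Rightarrow> real^'n" and lam :: "'n \<Rightarrow> real"
  where "\<And>i j. q i \<bullet> q j = (if i = j then 1 else 0)" "\<And>i. H *v q i = lam i *\<^sub>R q i"
proof -
  obtain B where B: "pairwise orthogonal B" "\<forall>b\<in>B. norm b = 1 \<and> (\<exists>l. H *v b = l *\<^sub>R b)" "span B = UNIV"
    using spectral_sub[OF sym, of UNIV] by auto
  have "0 \<notin> B" using B(2) by force
  hence ind: "independent B" using B(1) pairwise_orthogonal_independent by blast
  hence fin: "finite B" using finiteI_independent by blast
  have "card B = dim (UNIV :: (real^'n) set)" using dim_span_eq_card_independent[OF ind] B(3) by simp
  also have "\<dots> = CARD('n)" by simp
  finally have "card (UNIV::'n set) = card B" by simp
  then obtain h where h: "bij_betw h (UNIV::'n set) B" using finite_same_card_bij[OF finite_class.finite_UNIV fin] by blast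
  define lam where "lam i = (SOME l. H *v h i = l *\<^sub>R h i)" for i
  show ?thesis
  proof
    fix i j
    show "h i \<bullet> h j = (if i = j then 1 else 0)"
    proof (cases "i = j")
      case True
      then show ?thesis using B(2) h bij_betwE by (fastforce simp: dot_square_norm)
    next
      case False
      then have "h i \<noteq> h j" using h by (metis bij_betw_imp_inj_on inj_onD UNIV_I)
      then show ?thesis using False B(1) h unfolding pairwise_def orthogonal_def by (auto dest: bij_betwE)
    qed
  next
    fix i
    have "\<exists>l. H *v h i = l *\<^sub>R h i" using B(2) h by (auto dest: bij_betwE)
    thus "H *v h i = lam i *\<^sub>R h i" unfolding lam_def by (rule someI_ex)
  qed
qed

definition liftm :: "real^'n^'n \<Rightarrow> real poly^'n^'n" where
  "liftm A = (\<chi> i j. [:A$i$j:])"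

lemma const_sum: "(\<Sum>x\<in>A. [:f x:]) = [:\<Sum>x\<in>A. f x:]"
  by (induction A rule: infinite_finite_induct) auto

lemma liftm_mul: "liftm (A ** B) = liftm A ** liftm B"
  by (simp add: liftm_def matrix_matrix_mult_def vec_eq_iff const_sum)
    (intro allI sum.cong refl, simp)

lemma liftm_one: "liftm (mat 1) = mat 1"
  by (simp add: liftm_def mat_def vec_eq_iff)

definition Xm :: "real^'n^'n \<Rightarrow> real poly^'n^'n" where
  "Xm A = (\<chi> i j. [:0, A$i$j:])"

lemma X_sum: "(\<Sum>x\<in>A. [:0, f x:]) = [:0, \<Sum>x\<in>A. f x:]"
  by (induction A rule: infinite_finite_induct) auto

lemma liftm_Xm: "liftm A ** Xm B = Xm (A ** B)"
  by (simp add: liftm_def Xm_def matrix_matrix_mult_def vec_eq_iff X_sum)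
    (intro allI sum.cong refl, simp)


lemma Xm_liftm: "Xm A ** liftm B = Xm (A ** B)"
  by (simp add: liftm_def Xm_def matrix_matrix_mult_def vec_eq_iff X_sum)
    (intro allI sum.cong refl, simp)

lemma mm_diff_l: "(A::'a::ring_1^'n^'n) ** (B - C) = A ** B - A ** C"
  by (vector matrix_matrix_mult_def sum_subtractf right_diff_distrib)

lemma mm_diff_r: "((B - C)::'a::ring_1^'n^'n) ** A = B ** A - C ** A"
  by (vector matrix_matrix_mult_def sum_subtractf left_diff_distrib)

lemma charpoly_eq: "charpoly H = det (Xm (mat 1) - liftm H)"
  unfolding charpoly_def Xm_def liftm_def by (rule arg_cong[of _ _ det]) (simp add: vec_eq_iff mat_def)

lemma charpoly_diag:
  fixes H :: "real^'n^'n" and q :: "'n \<Rightarrow> real^'n"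
  assumes on: "\<And>i j. q i \<bullet> q j = (if i = j then 1 else 0)" and ev: "\<And>i. H *v q i = lam i *\<^sub>R q i"
  shows "charpoly H = (\<Prod>i\<in>UNIV. [:-lam i, 1:])"
proof -
  define Q :: "real^'n^'n" where "Q = (\<chi> a i. q i $ a)"
  have QQ: "transpose Q ** Q = mat 1"
    using on by (simp add: Q_def transpose_def matrix_matrix_mult_def vec_eq_iff mat_def inner_vec_def)
  have HQ: "H ** Q = (\<chi> a j. lam j * q j $ a)"
  proof -
    have "(H *v q j) $ a = lam j * q j $ a" for a j using ev[of j] by simp
    thus ?thesis by (simp add: Q_def matrix_matrix_mult_def matrix_vector_mult_def vec_eq_iff)
  qed
  have D: "transpose Q ** H ** Q = (\<chi> i j. if i = j then lam i else 0)"
  proof -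
    have "(\<Sum>k\<in>UNIV. q i $ k * (lam j * q j $ k)) = lam j * (q i \<bullet> q j)" for i j
      by (simp add: inner_vec_def sum_distrib_left algebra_simps)
    hence "transpose Q ** (H ** Q) = (\<chi> i j. if i = j then lam i else 0)" using on
      unfolding HQ by (simp add: Q_def transpose_def matrix_matrix_mult_def vec_eq_iff)
    thus ?thesis by (simp add: matrix_mul_assoc)
  qed
  let ?M = "Xm (mat 1) - liftm H"
  have "liftm (transpose Q) ** ?M ** liftm Q = Xm (mat 1) - liftm (\<chi> i j. if i = j then lam i else 0)"
    by (simp add: mm_diff_l mm_diff_r liftm_Xm Xm_liftm matrix_mul_assoc liftm_mul[symmetric] QQ D[symmetric]
        matrix_mul_lid)
  hence "det (liftm (transpose Q) ** ?M ** liftm Q) = (\<Prod>i\<in>UNIV. [:-lam i, 1:])"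
    by (simp, subst det_diagonal) (auto simp: Xm_def liftm_def mat_def)
  moreover have "det (liftm (transpose Q) ** ?M ** liftm Q) = det (liftm (transpose Q)) * det (liftm Q) * det ?M"
    by (simp add: det_mul)
  moreover have "det (liftm (transpose Q)) * det (liftm Q) = 1"
    by (simp add: det_mul[symmetric] liftm_mul[symmetric] QQ liftm_one)
  ultimately show ?thesis by (simp add: charpoly_eq)
qed


lemma order_lin: "order a [:-b, 1::real:] = (if a = b then 1 else 0)"
proof (cases "a = b")
  case True
  then show ?thesis using order_power_n_n[of a 1] by simp
next
  case False
  then show ?thesis by (simp add: order_0I)
qed

lemma order_prod_lin:
  fixes lam :: "'i \<Rightarrow> real"
  shows "finite A \<Longrightarrow> order a (\<Prod>i\<in>A. [:-lam i, 1:]) = card {i\<in>A. lam i = a}"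
proof (induction A rule: finite_induct)
  case empty
  then show ?case by (simp add: order_0I)
next
  case (insert x F)
  have nz: "(\<Prod>i\<in>F. [:-lam i, 1::real:]) \<noteq> 0" using insert by (simp add: prod_zero_iff)
  have "order a (\<Prod>i\<in>insert x F. [:-lam i, 1:]) = order a [:-lam x, 1:] + order a (\<Prod>i\<in>F. [:-lam i, 1:])"
  proof -
    have "(\<Prod>i\<in>insert x F. [:-lam i, 1:]) = [:-lam x, 1:] * (\<Prod>i\<in>F. [:-lam i, 1:])"
      using insert by simp
    moreover have "[:-lam x, 1:] * (\<Prod>i\<in>F. [:-lam i, 1:]) \<noteq> 0"
      proof -
        have "[:-lam x, 1::real:] \<noteq> 0" by simp
        thus ?thesis using nz by (metis mult_eq_0_iff)
      qed
    ultimately show ?thesis using order_mult by metis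
  qed
  also have "\<dots> = (if a = lam x then 1 else 0) + card {i\<in>F. lam i = a}"
    by (simp add: order_lin insert.IH)
  also have "\<dots> = card {i\<in>insert x F. lam i = a}"
  proof (cases "lam x = a")
    case True
    then have "{i\<in>insert x F. lam i = a} = insert x {i\<in>F. lam i = a}" by auto
    then show ?thesis using True insert by simp
  next
    case False
    then have "{i\<in>insert x F. lam i = a} = {i\<in>F. lam i = a}" by auto
    then show ?thesis using False by simp
  qed
  finally show ?case .
qed

lemma pos_index_prod:
  fixes lam :: "'n::finite \<Rightarrow> real" and H :: "real^'n^'n"
  assumes "charpoly H = (\<Prod>i\<in>UNIV. [:-lam i, 1:])"
  shows "positivity_index H = card {i. lam i > 0}"
proof -
  let ?P = "{i. lam i > 0}"
  have R: "{a. a > 0 \<and> poly (charpoly H) a = 0} = lam ` ?P"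
    unfolding assms by (auto simp: poly_prod prod_zero_iff)
  have "positivity_index H = (\<Sum>a\<in>lam ` ?P. card {i. lam i = a})"
    unfolding positivity_index_def R by (simp add: assms order_prod_lin)
  also have "\<dots> = (\<Sum>a\<in>lam ` ?P. card {i\<in>?P. lam i = a})"
    by (intro sum.cong refl arg_cong[of _ _ card]) auto
  also have "\<dots> = card ?P"
    using sum.image_gen[of ?P "\<lambda>_. 1::nat" lam] by simp
  finally show ?thesis .
qed


lemma axis_comp: "(v + t *\<^sub>R axis i 1) $ j = v $ j + t * (if j = i then 1 else 0)"
  by (simp add: axis_def)

lemma norm_axis_sq:
  fixes v :: "real^'n"
  shows "(norm (v + t *\<^sub>R axis i 1))\<^sup>2 = (norm v)\<^sup>2 + 2*t*(v$i) + t\<^sup>2"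
  unfolding power2_norm_eq_inner
  by (simp add: inner_add_left inner_add_right inner_axis inner_axis' inner_axis_axis
       inner_commute algebra_simps power2_eq_square)

lemma deriv_term1:
  fixes u :: "real^'n"
  assumes "u \<noteq> 0"
  shows "((\<lambda>t. ln ((norm (u + t *\<^sub>R axis j 1))\<^sup>2)) has_field_derivative 2*(u$j)/(norm u)\<^sup>2) (at 0)"
proof -
  have pos: "(norm u)\<^sup>2 > 0" using assms by simp
  have "((\<lambda>t. ln ((norm u)\<^sup>2 + 2*t*(u$j) + t\<^sup>2)) has_field_derivative (2*(u$j) + 2*0) / ((norm u)\<^sup>2 + 2*0*(u$j) + 0\<^sup>2)) (at 0)"
    using pos by (auto intro!: derivative_eq_intros)
  thus ?thesis by (simp add: norm_axis_sq)
qed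

lemma deriv_term2:
  fixes u :: "real^'n"
  assumes "u \<noteq> 0"
  shows "((\<lambda>t. 2*((u + t *\<^sub>R axis i 1)$j)/(norm (u + t *\<^sub>R axis i 1))\<^sup>2) has_field_derivative
     (2*(if j = i then 1 else 0)*(norm u)\<^sup>2 - 4*(u$j)*(u$i))/((norm u)\<^sup>2)\<^sup>2) (at 0)"
proof -
  have pos: "(norm u)\<^sup>2 > 0" using assms by simp
  have "((\<lambda>t. 2*(u$j + t * (if j = i then 1 else 0))/((norm u)\<^sup>2 + 2*t*(u$i) + t\<^sup>2)) has_field_derivative
     ((2*(0 + 1 * (if j = i then 1 else 0))) * ((norm u)\<^sup>2 + 2*0*(u$i) + 0\<^sup>2) - 2*(u$j + 0 * (if j = i then 1 else 0)) * (2*(u$i) + 2*0))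
       / ((norm u)\<^sup>2 + 2*0*(u$i) + 0\<^sup>2)^2) (at 0)"
    using pos by (intro derivative_eq_intros refl) auto
  moreover have eq: "(\<lambda>t. 2*((u + t *\<^sub>R axis i 1)$j)/(norm (u + t *\<^sub>R axis i 1))\<^sup>2) =
     (\<lambda>t. 2*(u$j + t * (if j = i then 1 else 0))/((norm u)\<^sup>2 + 2*t*(u$i) + t\<^sup>2))"
    by (simp only: axis_comp norm_axis_sq)
  moreover have val: "((2*(0 + 1 * (if j = i then 1 else 0))) * ((norm u)\<^sup>2 + 2*0*(u$i) + 0\<^sup>2) - 2*(u$j + 0 * (if j = i then 1 else 0)) * (2*(u$i) + 2*0))
       / ((norm u)\<^sup>2 + 2*0*(u$i) + 0\<^sup>2)^2 = (2*(if j = i then 1 else 0)*(norm u)\<^sup>2 - 4*(u$j)*(u$i))/((norm u)\<^sup>2)\<^sup>2"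
    by simp
  ultimately show ?thesis by (simp only:)
qed


lemma pd_f:
  fixes w :: "nat \<Rightarrow> real^'d" and f :: "real^'d \<Rightarrow> real"
  assumes f_def: "\<And>y. f y = (\<Sum>i<r. ln ((norm (y - w i))\<^sup>2))" and y: "y \<notin> w ` {..<r}"
  shows "partial_deriv f j y = (\<Sum>k<r. 2*((y - w k)$j)/(norm (y - w k))\<^sup>2)"
proof -
  have eq: "(\<lambda>t. f (y + t *\<^sub>R axis j 1)) = (\<lambda>t. \<Sum>k<r. ln ((norm ((y - w k) + t *\<^sub>R axis j 1))\<^sup>2))"
    by (simp add: f_def algebra_simps)
  have "((\<lambda>t. \<Sum>k<r. ln ((norm ((y - w k) + t *\<^sub>R axis j 1))\<^sup>2)) has_field_derivative
      (\<Sum>k<r. 2*((y - w k)$j)/(norm (y - w k))\<^sup>2)) (at 0)"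
    by (intro DERIV_sum deriv_term1) (use y in auto)
  thus ?thesis unfolding partial_deriv_def eq by (rule DERIV_imp_deriv)
qed

lemma hess_f:
  fixes w :: "nat \<Rightarrow> real^'d" and f :: "real^'d \<Rightarrow> real"
  assumes f_def: "\<And>y. f y = (\<Sum>i<r. ln ((norm (y - w i))\<^sup>2))" and x: "x \<notin> w ` {..<r}"
  shows "hessian f x = (\<chi> i j. \<Sum>k<r. (2*(if j = i then 1 else 0)*(norm (x - w k))\<^sup>2
       - 4*((x - w k)$j)*((x - w k)$i))/((norm (x - w k))\<^sup>2)\<^sup>2)"
proof -
  have "partial_deriv (partial_deriv f j) i x = (\<Sum>k<r. (2*(if j = i then 1 else 0)*(norm (x - w k))\<^sup>2
       - 4*((x - w k)$j)*((x - w k)$i))/((norm (x - w k))\<^sup>2)\<^sup>2)" for i j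
  proof -
    have ev: "eventually (\<lambda>t. x + t *\<^sub>R axis i 1 \<notin> w ` {..<r}) (nhds 0)"
    proof -
      have "(\<lambda>t::real. x + t *\<^sub>R axis i 1) \<midarrow>0\<rightarrow> x + 0 *\<^sub>R axis i 1"
        by (intro tendsto_intros)
      hence lim: "((\<lambda>t::real. x + t *\<^sub>R axis i 1) \<longlongrightarrow> x) (nhds 0)"
        using tendsto_at_iff_tendsto_nhds[of "\<lambda>t::real. x + t *\<^sub>R axis i 1" 0] by simp
      have "\<forall>k\<in>{..<r}. eventually (\<lambda>t. x + t *\<^sub>R axis i 1 \<noteq> w k) (nhds 0)"
        using x by (auto intro!: tendsto_imp_eventually_ne[OF lim])
      from eventually_ball_finite[OF finite_lessThan this] show ?thesis
        by (rule eventually_mono) auto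
    qed
    have ev2: "eventually (\<lambda>t. partial_deriv f j (x + t *\<^sub>R axis i 1) =
        (\<Sum>k<r. 2*(((x - w k) + t *\<^sub>R axis i 1)$j)/(norm ((x - w k) + t *\<^sub>R axis i 1))\<^sup>2)) (nhds 0)"
      using ev by (rule eventually_mono) (simp add: pd_f[OF f_def] algebra_simps)
    have "((\<lambda>t. \<Sum>k<r. 2*(((x - w k) + t *\<^sub>R axis i 1)$j)/(norm ((x - w k) + t *\<^sub>R axis i 1))\<^sup>2)
        has_field_derivative (\<Sum>k<r. (2*(if j = i then 1 else 0)*(norm (x - w k))\<^sup>2
       - 4*((x - w k)$j)*((x - w k)$i))/((norm (x - w k))\<^sup>2)\<^sup>2)) (at 0)"
      by (intro DERIV_sum deriv_term2) (use x in auto)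
    hence "((\<lambda>t. partial_deriv f j (x + t *\<^sub>R axis i 1))
        has_field_derivative (\<Sum>k<r. (2*(if j = i then 1 else 0)*(norm (x - w k))\<^sup>2
       - 4*((x - w k)$j)*((x - w k)$i))/((norm (x - w k))\<^sup>2)\<^sup>2)) (at 0)"
      using DERIV_cong_ev[OF refl ev2 refl] by simp
    thus ?thesis unfolding partial_deriv_def[of "partial_deriv f j"] by (rule DERIV_imp_deriv)
  qed
  thus ?thesis unfolding hessian_def by (simp add: vec_eq_iff)
qed


lemma Hv_formula:
  fixes u :: "nat \<Rightarrow> real^'n" and v :: "real^'n"
  assumes nz: "\<And>k. k < r \<Longrightarrow> u k \<noteq> 0"
  defines "H \<equiv> (\<chi> i j. \<Sum>k<r. (2*(if j = i then 1 else 0)*(norm (u k))\<^sup>2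
       - 4*((u k)$j)*((u k)$i))/((norm (u k))\<^sup>2)\<^sup>2)"
  shows "H *v v = (\<Sum>k<r. (2/(norm (u k))\<^sup>2) *\<^sub>R v - (4*(u k \<bullet> v)/((norm (u k))\<^sup>2)\<^sup>2) *\<^sub>R u k)"
proof -
  have "(H *v v) $ i = (\<Sum>k<r. 2/(norm (u k))\<^sup>2 * v$i - 4*(u k \<bullet> v)/((norm (u k))\<^sup>2)\<^sup>2 * (u k $ i))" for i
  proof -
    have "(H *v v) $ i = (\<Sum>j\<in>UNIV. \<Sum>k<r. (2*(if j = i then 1 else 0)*(norm (u k))\<^sup>2
       - 4*((u k)$j)*((u k)$i))/((norm (u k))\<^sup>2)\<^sup>2 * v$j)"
      by (simp add: H_def matrix_vector_mult_def sum_distrib_right)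
    also have "\<dots> = (\<Sum>k<r. \<Sum>j\<in>UNIV. (2*(if j = i then 1 else 0)*(norm (u k))\<^sup>2
       - 4*((u k)$j)*((u k)$i))/((norm (u k))\<^sup>2)\<^sup>2 * v$j)"
      by (rule sum.swap)
    also have "\<dots> = (\<Sum>k<r. 2/(norm (u k))\<^sup>2 * v$i - 4*(u k \<bullet> v)/((norm (u k))\<^sup>2)\<^sup>2 * (u k $ i))"
    proof (rule sum.cong[OF refl])
      fix k assume k: "k \<in> {..<r}"
      define p where "p = (norm (u k))\<^sup>2"
      have p: "p > 0" using nz k unfolding p_def by simp
      have "(\<Sum>j\<in>UNIV. (2*(if j = i then 1 else 0)*p - 4*((u k)$j)*((u k)$i))/p\<^sup>2 * v$j)
          = (\<Sum>j\<in>UNIV. (2/p) * (if j = i then v$j else 0) - (4*(u k $ i)/p\<^sup>2) * ((u k $ j) * v$j))"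
        using p by (intro sum.cong refl) (auto simp: field_simps power2_eq_square)
      also have "\<dots> = 2/p * v$i - 4*(u k \<bullet> v)/p\<^sup>2 * (u k $ i)"
        unfolding sum_subtractf sum_distrib_left[symmetric] inner_vec_def by simp
      finally show "(\<Sum>j\<in>UNIV. (2*(if j = i then 1 else 0)*(norm (u k))\<^sup>2
       - 4*((u k)$j)*((u k)$i))/((norm (u k))\<^sup>2)\<^sup>2 * v$j) = 2/(norm (u k))\<^sup>2 * v$i - 4*(u k \<bullet> v)/((norm (u k))\<^sup>2)\<^sup>2 * (u k $ i)"
        unfolding p_def .
    qed
    finally show ?thesis .
  qed
  thus ?thesis by (simp add: vec_eq_iff sum_component)
qed


lemma norm_proj2:
  fixes u e1 e2 :: "real^'n"
  assumes "e1 \<bullet> e1 = 1" "e2 \<bullet> e2 = 1" "e1 \<bullet> e2 = 0"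
  shows "(norm (u - (u \<bullet> e1) *\<^sub>R e1 - (u \<bullet> e2) *\<^sub>R e2))\<^sup>2 = (norm u)\<^sup>2 - (u \<bullet> e1)\<^sup>2 - (u \<bullet> e2)\<^sup>2"
  using assms unfolding power2_norm_eq_inner
  by (simp add: inner_diff_left inner_diff_right inner_commute power2_eq_square algebra_simps)

theorem proposition2p4:
  fixes n r :: nat and w :: "nat \<Rightarrow> real^'d" and x :: "real^'d"
    and f :: "real^'d \<Rightarrow> real"
  assumes dim: "CARD('d) = 2 * n"
    and distinct: "inj_on w {..<r}"
    and span: "aff_dim (w ` {..<r}) \<ge> 3"
    and f_def: "\<And>y. f y = (\<Sum>i<r. ln ((norm (y - w i))\<^sup>2))"
    and x_dom: "x \<notin> w ` {..<r}"
    and crit: "(f has_derivative (\<lambda>_. 0)) (at x)"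
  shows "positivity_index (hessian f x) \<ge> 2 * n - 1"
proof -
  define u where "u k = x - w k" for k
  have nz: "\<And>k. k < r \<Longrightarrow> u k \<noteq> 0" using x_dom unfolding u_def by auto
  define H where "H \<equiv> (\<chi> i j. \<Sum>k<r. (2*(if j = i then 1 else 0)*(norm (u k))\<^sup>2
       - 4*((u k)$j)*((u k)$i))/((norm (u k))\<^sup>2)\<^sup>2) :: real^'d^'d"
  have hess: "hessian f x = H" unfolding H_def u_def by (rule hess_f[OF f_def x_dom])
  have sym: "transpose H = H"
    unfolding H_def by (simp add: transpose_def vec_eq_iff eq_commute)
      (intro allI impI sum.cong refl, simp add: ac_simps)
  obtain q :: "'d \<Rightarrow> real^'d" and lam where on: "\<And>i j. q i \<bullet> q j = (if i = j then 1 else 0)"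
    and ev: "\<And>i. H *v q i = lam i *\<^sub>R q i"
    using spectral[OF sym] by metis
  have pi: "positivity_index H = card {i. lam i > 0}"
    by (rule pos_index_prod[OF charpoly_diag[OF on ev]])
  have qf: "e \<bullet> (H *v e) = (\<Sum>k<r. 2/(norm (u k))\<^sup>2 * (e \<bullet> e) - 4*(u k \<bullet> e)\<^sup>2/((norm (u k))\<^sup>2)\<^sup>2)" for e
  proof -
    have Hv: "H *v e = (\<Sum>k<r. (2/(norm (u k))\<^sup>2) *\<^sub>R e - (4*(u k \<bullet> e)/((norm (u k))\<^sup>2)\<^sup>2) *\<^sub>R u k)"
      unfolding H_def by (rule Hv_formula[OF nz])
    show ?thesis unfolding Hv
    by (simp add: inner_sum_right inner_diff_right inner_commute power2_eq_square mult.assoc)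
  qed
  have key: False if ij: "i \<noteq> j" "lam i \<le> 0" "lam j \<le> 0" for i j
  proof -
    define e1 where "e1 = q i"
    define e2 where "e2 = q j"
    have o: "e1 \<bullet> e1 = 1" "e2 \<bullet> e2 = 1" "e1 \<bullet> e2 = 0" using on ij unfolding e1_def e2_def by auto
    have "e1 \<bullet> (H *v e1) = lam i" "e2 \<bullet> (H *v e2) = lam j"
      using ev o unfolding e1_def e2_def by auto
    hence le: "e1 \<bullet> (H *v e1) + e2 \<bullet> (H *v e2) \<le> 0" using ij by simp
    define T where "T k = 4*(norm (u k - (u k \<bullet> e1) *\<^sub>R e1 - (u k \<bullet> e2) *\<^sub>R e2))\<^sup>2/((norm (u k))\<^sup>2)\<^sup>2" for k
    have "e1 \<bullet> (H *v e1) + e2 \<bullet> (H *v e2) = (\<Sum>k<r. T k)"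
    proof -
      have "e1 \<bullet> (H *v e1) + e2 \<bullet> (H *v e2) = (\<Sum>k<r. (2/(norm (u k))\<^sup>2 * (e1 \<bullet> e1) - 4*(u k \<bullet> e1)\<^sup>2/((norm (u k))\<^sup>2)\<^sup>2)
          + (2/(norm (u k))\<^sup>2 * (e2 \<bullet> e2) - 4*(u k \<bullet> e2)\<^sup>2/((norm (u k))\<^sup>2)\<^sup>2))"
        unfolding qf by (simp add: sum.distrib)
      also have "\<dots> = (\<Sum>k<r. T k)"
      proof (rule sum.cong[OF refl])
        fix k assume "k \<in> {..<r}"
        hence p: "(norm (u k))\<^sup>2 > 0" using nz by simp
        show "(2/(norm (u k))\<^sup>2 * (e1 \<bullet> e1) - 4*(u k \<bullet> e1)\<^sup>2/((norm (u k))\<^sup>2)\<^sup>2)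
          + (2/(norm (u k))\<^sup>2 * (e2 \<bullet> e2) - 4*(u k \<bullet> e2)\<^sup>2/((norm (u k))\<^sup>2)\<^sup>2) = T k"
        proof -
          have alg: "\<And>p a b::real. p > 0 \<Longrightarrow> (2/p*1 - 4*a\<^sup>2/p\<^sup>2) + (2/p*1 - 4*b\<^sup>2/p\<^sup>2) = 4*(p - a\<^sup>2 - b\<^sup>2)/p\<^sup>2"
            by (simp add: field_simps power2_eq_square)
          show ?thesis unfolding T_def norm_proj2[OF o] o by (rule alg[OF p])
        qed
      qed
      finally show ?thesis .
    qed
    with le have sle: "(\<Sum>k<r. T k) \<le> 0" by simp
    have Tnn: "\<forall>k\<in>{..<r}. T k \<ge> 0" unfolding T_def by simp
    hence "(\<Sum>k<r. T k) \<ge> 0" by (intro sum_nonneg) auto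
    hence "(\<Sum>k<r. T k) = 0" using sle by linarith
    hence T0: "\<forall>k\<in>{..<r}. T k = 0" using Tnn sum_nonneg_eq_0_iff[of "{..<r}" T] by simp
    have sub: "w ` {..<r} \<subseteq> affine hull {x, x + e1, x + e2}"
    proof
      fix y assume "y \<in> w ` {..<r}"
      then obtain k where k: "k < r" "y = w k" by auto
      have p: "(norm (u k))\<^sup>2 > 0" using nz k by simp
      from T0 k have "T k = 0" by auto
      hence "u k - (u k \<bullet> e1) *\<^sub>R e1 - (u k \<bullet> e2) *\<^sub>R e2 = 0" unfolding T_def using p by simp
      hence "y = (1 + (u k \<bullet> e1) + (u k \<bullet> e2)) *\<^sub>R x + (-(u k \<bullet> e1)) *\<^sub>R (x + e1) + (-(u k \<bullet> e2)) *\<^sub>R (x + e2)"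
        using k unfolding u_def by (simp add: algebra_simps)
      thus "y \<in> affine hull {x, x + e1, x + e2}" unfolding affine_hull_3
        by (intro CollectI exI[where x="1 + (u k \<bullet> e1) + (u k \<bullet> e2)"] exI[where x="-(u k \<bullet> e1)"]
            exI[where x="-(u k \<bullet> e2)"]) simp
    qed
    have "aff_dim (w ` {..<r}) \<le> aff_dim (affine hull {x, x + e1, x + e2})"
      by (rule aff_dim_subset[OF sub])
    also have "\<dots> = aff_dim {x, x + e1, x + e2}" by simp
    also have "\<dots> \<le> int (card {x, x + e1, x + e2}) - 1" by (rule aff_dim_le_card) simp
    also have "\<dots> \<le> 2"
    proof -
      have "card {x, x + e1, x + e2} \<le> 3" by (simp add: card_insert_if)
      thus ?thesis by simp
    qed
    finally show False using span by simp
  qed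
  have le1: "card {i. lam i \<le> 0} \<le> 1"
  proof -
    have "card {i. lam i \<le> 0} \<le> Suc 0"
      using key by (subst card_le_Suc0_iff_eq) auto
    thus ?thesis by simp
  qed
  have "{i. lam i > 0} = UNIV - {i. lam i \<le> 0}" by auto
  hence "card {i. lam i > 0} = CARD('d) - card {i. lam i \<le> 0}"
    by (simp add: card_Diff_subset)
  thus ?thesis using le1 dim hess pi by simp
qed

end
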